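(* Let $\widehat{X}=X+\epsilon X_0$ and $\widehat{Y}=Y+\epsilon Y_0$ with $X,X_0,Y,Y_0\in\mathbb{R}^{n\times n}$, $Ind(\widehat{X})=1$, be such that the dual group generalized inverse of $\widehat{X}$ exists. Then $\widehat{X}\leq_{D}^{\#}\widehat{Y}$ if and only if $$X\leq^{\#}Y,\qquad X^{\#}X_0+RX= X^{\#}Y_0+RY,\qquad XR+X_0X^{\#}= YR+Y_0X^{\#},$$ where $R=-X^{\#}X_0X^{\#}+(X^{\#})^2X_0(I-XX^{\#})+(I-XX^{\#})X_0(X^{\#})^2$.
   Context: A dual number is $a+\epsilon b$ with $a,b\in\mathbb{R}$, where $\epsilon\neq 0$, $\epsilon^2=0$ and $\epsilon$ commutes with reals. A dual matrix is $A+\epsilon B$ with $A,B$ real; sums and products are computed formally using $\epsilon^2=0$, and equality means equality of real and dual parts. $X^{\#}$ is the group inverse of a real square matrix $X$. For a square dual matrix $\widehat{A}$ of dual index $1$ (i.e., $\{\widehat{A}\widehat{z}\}=\{\widehat{A}^2\widehat{z}\}$ as $\widehat{z}$ ranges over dual vectors), its dual group generalized inverse $\widehat{A}^{\#}$ is the unique dual matrix $\widehat{G}$ (if it exists) with $\widehat{A}\widehat{G}\widehat{A}=\widehat{A}$, $\widehat{G}\widehat{A}\widehat{G}=\widehat{G}$, $\widehat{A}\widehat{G}=\widehat{G}\widehat{A}$. D-group order: when $\widehat{X}^{\#}$ exists, $\widehat{X}\leq_{D}^{\#}\widehat{Y}$ means $\widehat{X}^{\#}\widehat{X}=\widehat{X}^{\#}\widehat{Y}$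 and $\widehat{X}\widehat{X}^{\#}=\widehat{Y}\widehat{X}^{\#}$. Group partial order on real matrices: $X\leq^{\#}Y$ means $X^{\#}X=X^{\#}Y$ and $XX^{\#}=YX^{\#}$. *)

theory Defs
  imports "HOL-Analysis.Analysis"
begin

text \<open>Real n x n matrices are rendered as real^'n^'n. A dual matrix A + eps B is
represented by the pair (A, B); a dual vector x + eps y by the pair (x, y).\<close>

type_synonym 'n dmat = "(real^'n^'n) \<times> (real^'n^'n)"
type_synonym 'n dvec = "(real^'n) \<times> (real^'n)"

definition dmult :: "'n::finite dmat \<Rightarrow> 'n dmat \<Rightarrow> 'n dmat" where
  "dmult P Q = (fst P ** fst Q, fst P ** snd Q + snd P ** fst Q)"

definition dmv :: "'n::finite dmat \<Rightarrow> 'n dvec \<Rightarrow> 'n dvec" where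
  "dmv P z = (fst P *v fst z, fst P *v snd z + snd P *v fst z)"

definition dual_index_one :: "'n::finite dmat \<Rightarrow> bool" where
  "dual_index_one A \<longleftrightarrow> range (dmv A) = range (dmv (dmult A A))"

definition is_dual_group_inverse :: "'n::finite dmat \<Rightarrow> 'n dmat \<Rightarrow> bool" where
  "is_dual_group_inverse A G \<longleftrightarrow>
     dmult (dmult A G) A = A \<and> dmult (dmult G A) G = G \<and> dmult A G = dmult G A"

definition dual_group_inv :: "'n::finite dmat \<Rightarrow> 'n dmat" where
  "dual_group_inv A = (THE G. is_dual_group_inverse A G)"

definition D_group_le :: "'n::finite dmat \<Rightarrow> 'n dmat \<Rightarrow> bool" where
  "D_group_le X Y \<longleftrightarrow>
     dmult (dual_group_inv X) X = dmult (dual_group_inv X) Y \<and>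
     dmult X (dual_group_inv X) = dmult Y (dual_group_inv X)"

definition is_group_inverse :: "real^'n^'n \<Rightarrow> real^'n^'n \<Rightarrow> bool" where
  "is_group_inverse X G \<longleftrightarrow> X ** G ** X = X \<and> G ** X ** G = G \<and> X ** G = G ** X"

definition group_inv :: "real^'n^'n \<Rightarrow> real^'n^'n" where
  "group_inv X = (THE G. is_group_inverse X G)"

definition group_le :: "real^'n^'n \<Rightarrow> real^'n^'n \<Rightarrow> bool" where
  "group_le X Y \<longleftrightarrow> group_inv X ** X = group_inv X ** Y \<and> X ** group_inv X = Y ** group_inv X"

end

theory Submission
  imports Defs
begin

lemma mm_radd: "((A::real^'n^'n) + B) ** C = A ** C + B ** C"
  by (simp add: matrix_matrix_mult_def vec_eq_iff sum.distrib algebra_simps)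
lemma mm_ldiff: "(A::real^'n^'n) ** (B - C) = A ** B - A ** C"
  by (simp add: matrix_matrix_mult_def vec_eq_iff sum_subtractf algebra_simps)
lemma mm_rdiff: "((A::real^'n^'n) - B) ** C = A ** C - B ** C"
  by (simp add: matrix_matrix_mult_def vec_eq_iff sum_subtractf algebra_simps)
lemma mm_lneg: "(A::real^'n^'n) ** (- B) = - (A ** B)"
  by (simp add: matrix_matrix_mult_def vec_eq_iff sum_negf)
lemma mm_rneg: "(- (A::real^'n^'n)) ** B = - (A ** B)"
  by (simp add: matrix_matrix_mult_def vec_eq_iff sum_negf)
lemma mm_l0: "(0::real^'n^'n) ** B = 0"
  by (simp add: matrix_matrix_mult_def vec_eq_iff)
lemma mm_r0: "(A::real^'n^'n) ** 0 = 0"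
  by (simp add: matrix_matrix_mult_def vec_eq_iff)

lemma group_inv_unique:
  fixes A G G' :: "real^'n^'n"
  assumes "is_group_inverse A G" "is_group_inverse A G'"
  shows "G = G'"
proof -
  have a: "A ** G ** A = A" "G ** A ** G = G" "A ** G = G ** A"
    and b: "A ** G' ** A = A" "G' ** A ** G' = G'" "A ** G' = G' ** A"
    using assms by (auto simp: is_group_inverse_def)
  have "A ** G = (A ** G' ** A) ** G" using b by simp
  also have "\<dots> = G' ** (A ** G ** A)" using a b by (metis matrix_mul_assoc)
  also have "\<dots> = A ** G'" using a b by simp
  finally have P: "A ** G = A ** G'" .
  have "G = G ** (A ** G)" using a by (metis matrix_mul_assoc)
  also have "\<dots> = G ** (A ** G')" using P by simp
  also have "\<dots> = G' ** A ** G'" using a b P by (metis matrix_mul_assoc)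
  finally show ?thesis using b by simp
qed

lemma group_inv_eq:
  assumes "is_group_inverse A G" shows "group_inv A = G"
  unfolding group_inv_def using assms group_inv_unique by blast

lemma dual_part:
  fixes A B G H :: "real^'n^'n"
  assumes g1: "A ** G ** A = A" and g2: "G ** A ** G = G" and g3: "A ** G = G ** A"
    and e1: "A ** G ** B + (A ** H + B ** G) ** A = B"
    and e2: "G ** A ** H + (G ** B + H ** A) ** G = H"
    and e3: "A ** H + B ** G = G ** B + H ** A"
  shows "H = - (G ** B ** G) + (G ** G) ** B ** (mat 1 - A ** G)
             + (mat 1 - A ** G) ** B ** (G ** G)"
proof -
  define P where "P = A ** G"
  define Q where "Q = mat 1 - A ** G"
  have PQ: "P + Q = mat 1" unfolding P_def Q_def by simp
  have QA: "Q ** A = 0" unfolding Q_def using g1 by (simp add: mm_rdiff)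
  have AQ: "A ** Q = 0" unfolding Q_def using g1 g3
    by (simp add: mm_ldiff matrix_mul_assoc)
  have QG: "Q ** G = 0" unfolding Q_def using g2 g3
    by (simp add: mm_rdiff matrix_mul_assoc)
  have GQ: "G ** Q = 0"
  proof -
    have "G ** Q = G - G ** (A ** G)" unfolding Q_def by (simp add: mm_ldiff)
    also have "\<dots> = 0" using g2 by (simp add: matrix_mul_assoc)
    finally show ?thesis .
  qed
  have PA: "P ** A = A" unfolding P_def using g1 .
  have AP: "A ** P = A" unfolding P_def using g1 g3 by (simp add: matrix_mul_assoc)
  have GP: "G ** P = G" unfolding P_def using g2 by (metis matrix_mul_assoc)
  have PG: "P ** G = G" unfolding P_def using g2 g3 by metis
  have PGA: "P = G ** A" unfolding P_def using g3 .
  have decomp: "H = P ** H ** P + P ** H ** Q + Q ** H ** P + Q ** H ** Q"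
  proof -
    have "H = (P + Q) ** H ** (P + Q)" using PQ by simp
    thus ?thesis by (simp add: mm_radd matrix_add_ldistrib add_ac)
  qed
  have e1a: "A ** G ** B + (A ** H ** A + B ** G ** A) = B" using e1 by (simp only: mm_radd)
  have bga: "B ** G ** A = B ** P" using g3 P_def by (metis matrix_mul_assoc)
  have e1b: "P ** B + A ** H ** A + B ** P = B" using e1a bga P_def by (simp add: add.assoc)
  hence "G ** (P ** B + A ** H ** A + B ** P) ** G = G ** B ** G" by simp
  hence "G ** (P ** B) ** G + G ** (A ** H ** A) ** G + G ** (B ** P) ** G = G ** B ** G"
    by (simp only: mm_radd matrix_add_ldistrib)
  moreover have "G ** (P ** B) ** G = G ** B ** G" using GP by (metis matrix_mul_assoc)
  moreover have "G ** (B ** P) ** G = G ** B ** G" using PG by (metis matrix_mul_assoc)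
  moreover have "G ** (A ** H ** A) ** G = P ** H ** P"
  proof -
    have "P ** H ** P = G ** A ** H ** (A ** G)" using PGA P_def by simp
    thus ?thesis by (simp add: matrix_mul_assoc)
  qed
  ultimately have h: "G ** B ** G + P ** H ** P + G ** B ** G = G ** B ** G" by simp
  have "G ** B ** G + (P ** H ** P + G ** B ** G) = G ** B ** G + 0" using h by (simp add: add.assoc)
  hence "P ** H ** P + G ** B ** G = 0" by (simp only: add_left_cancel)
  hence PHP: "P ** H ** P = - (G ** B ** G)" by (simp add: eq_neg_iff_add_eq_0)
  have "Q ** (G ** A ** H + (G ** B + H ** A) ** G) ** Q = Q ** H ** Q" using e2 by simp
  hence QHQ: "Q ** H ** Q = 0"
    using QG GQ QA AQ
    by (simp add: mm_radd matrix_add_ldistrib matrix_mul_assoc mm_l0 mm_r0)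
       (metis QG matrix_mul_assoc mm_l0 mm_r0)
  have "G ** (A ** H + B ** G) ** Q = G ** (G ** B + H ** A) ** Q" using e3 by simp
  hence "G ** A ** H ** Q + G ** B ** (G ** Q) = G ** G ** B ** Q + G ** H ** (A ** Q)"
    by (simp add: mm_radd matrix_add_ldistrib matrix_mul_assoc)
  hence PHQ: "P ** H ** Q = G ** G ** B ** Q"
    using GQ AQ PGA by (simp add: mm_r0)
  have "Q ** (A ** H + B ** G) ** G = Q ** (G ** B + H ** A) ** G" using e3 by simp
  hence "(Q ** A) ** H ** G + Q ** B ** G ** G = (Q ** G) ** B ** G + Q ** H ** (A ** G)"
    by (simp add: mm_radd matrix_add_ldistrib matrix_mul_assoc)
  hence QHP: "Q ** H ** P = Q ** B ** (G ** G)"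
    using QA QG P_def by (simp add: mm_l0 matrix_mul_assoc)
  show ?thesis
    using decomp PHP QHQ PHQ QHP unfolding Q_def[symmetric]
    by (simp add: matrix_mul_assoc)
qed

theorem mainTheorem11:
  fixes X X0 Y Y0 :: "real^'n^'n"
  assumes "dual_index_one (X, X0)"
    and "\<exists>G. is_dual_group_inverse (X, X0) G"
  shows "D_group_le (X, X0) (Y, Y0) \<longleftrightarrow>
    (let Xg = group_inv X;
         R = - (Xg ** X0 ** Xg) + (Xg ** Xg) ** X0 ** (mat 1 - X ** Xg)
             + (mat 1 - X ** Xg) ** X0 ** (Xg ** Xg)
     in group_le X Y \<and>
        Xg ** X0 + R ** X = Xg ** Y0 + R ** Y \<and>
        X ** R + X0 ** Xg = Y ** R + Y0 ** Xg)"
proof -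
  have key: "is_dual_group_inverse (X, X0) (G, H) \<Longrightarrow> G = group_inv X \<and>
     H = - (group_inv X ** X0 ** group_inv X) + (group_inv X ** group_inv X) ** X0 ** (mat 1 - X ** group_inv X)
             + (mat 1 - X ** group_inv X) ** X0 ** (group_inv X ** group_inv X)" for G H
  proof -
    assume d: "is_dual_group_inverse (X, X0) (G, H)"
    hence g: "X ** G ** X = X" "G ** X ** G = G" "X ** G = G ** X"
      and e: "X ** G ** X0 + (X ** H + X0 ** G) ** X = X0"
             "G ** X ** H + (G ** X0 + H ** X) ** G = H"
             "X ** H + X0 ** G = G ** X0 + H ** X"
      by (auto simp: is_dual_group_inverse_def dmult_def)
    have "group_inv X = G" by (rule group_inv_eq) (use g in \<open>simp add: is_group_inverse_def\<close>)
    with dual_part[OF g e] show ?thesis by simp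
  qed
  obtain G H where gh: "is_dual_group_inverse (X, X0) (G, H)" using assms(2) by auto
  have "dual_group_inv (X, X0) = (G, H)"
    unfolding dual_group_inv_def
  proof (rule the_equality)
    show "is_dual_group_inverse (X, X0) (G, H)" by (rule gh)
    fix K assume "is_dual_group_inverse (X, X0) K"
    then show "K = (G, H)" using key[of "fst K" "snd K"] key[OF gh] by (simp add: prod_eq_iff)
  qed
  with key[OF gh] show ?thesis
    by (simp add: D_group_le_def dmult_def group_le_def Let_def) blast
qed

end
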